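(* Let $k$ be a field of characteristic $0$. Let $f:R\to S$ be a homomorphism of commutative $k$-algebras which maps an ideal $I$ of $R$ isomorphically onto an ideal of $S$ (also denoted $I$). Assume that $S$ is locally a principal ideal ring (every localization of $S$ at a maximal ideal is a principal ideal ring) and that $S/I$ is finite-dimensional over $k$. Then the composite map $$HH_2(S/I)\xrightarrow{\ \partial\ } HH_1(S,I)\longrightarrow I\otimes_S\Omega_{S/R}$$ is surjective, where $\partial$ is the connecting homomorphism and the second map sends the class of $x\otimes r$ to $x\otimes dr$ and the class of $r\otimes x$ to $-x\otimes dr$ (for $x\in I$, $r\in S$).
   Context: Tensor products $\otimes$ without subscript are over $k$. For a commutative $k$-algebra $S$, the Hochschild complex $C_*(S)$ has $C_n(S)=S^{\otimes(n+1)}$ with the standard Hochschild boundary $b$ (in low degrees $b(x\otimes y)=xy-yx=0$ and $b(x\otimes y\otimes z)=xy\otimes z-x\otimes yz+zx\otimes y$); its homology is $HH_*(S)$. For an ideal $I$ of $S$, $C_*(S,I)$ is the kernel of the surjection $C_*(S)\to C_*(S/I)$ and $HH_*(S,I)$ is its homology; the short exact sequence $0\to C_*(S,I)\to C_*(S)\to C_*(S/I)\to 0$ gives the connecting map $\partial: HH_{n+1}(S/I)\to HH_n(S,I)$. Concretely $HH_1(S,I)$ is the quotient of $S\otimes I+I\otimes S\subseteq S\otimes S$ by the image under $b$ of $S\otimes S\otimes I+S\otimes I\otimes S+I\otimes S\otimes S$. $\Omega_{S/R}$ denotes the Kähler differentials of $S$ relative to $R$ (via $f$). *)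

theory Defs
  imports Main "HOL-Library.Poly_Mapping"
begin

(* Formal integer combinations ('x \<Rightarrow>\<^sub>0 int, i.e. free abelian groups, with
  frag_of / frag_extend from Poly_Mapping) are used to present tensor products
  and the Hochschild chain groups by generators and relations. *)

definition is_ideal :: "'a::comm_ring_1 set \<Rightarrow> bool" where
  "is_ideal A \<longleftrightarrow> 0 \<in> A \<and> (\<forall>a\<in>A. \<forall>b\<in>A. a + b \<in> A) \<and> (\<forall>r. \<forall>a\<in>A. r * a \<in> A)"

definition is_maximal_ideal :: "'a::comm_ring_1 set \<Rightarrow> bool" where
  "is_maximal_ideal M \<longleftrightarrow> is_ideal M \<and> M \<noteq> UNIV \<and>
     (\<forall>A. is_ideal A \<and> M \<subseteq> A \<longrightarrow> A = M \<or> A = UNIV)"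

definition is_ring_hom :: "('a::comm_ring_1 \<Rightarrow> 'b::comm_ring_1) \<Rightarrow> bool" where
  "is_ring_hom h \<longleftrightarrow> h 1 = 1 \<and> (\<forall>a b. h (a + b) = h a + h b) \<and> (\<forall>a b. h (a * b) = h a * h b)"

definition loc_eq :: "'a::comm_ring_1 set \<Rightarrow> 'a \<times> 'a \<Rightarrow> 'a \<times> 'a \<Rightarrow> bool" where
  "loc_eq m p q \<longleftrightarrow> (\<exists>u. u \<notin> m \<and> u * (fst p * snd q - fst q * snd p) = 0)"

(* An ideal of S_m, given as the (saturated) set of all fractions representing its elements. *)
definition loc_ideal :: "'a::comm_ring_1 set \<Rightarrow> ('a \<times> 'a) set \<Rightarrow> bool" where
  "loc_ideal m A \<longleftrightarrow>
     A \<subseteq> {p. snd p \<notin> m} \<and> (0, 1) \<in> A \<and>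
     (\<forall>p\<in>A. \<forall>q\<in>A. (fst p * snd q + fst q * snd p, snd p * snd q) \<in> A) \<and>
     (\<forall>p\<in>A. \<forall>c u. u \<notin> m \<longrightarrow> (c * fst p, u * snd p) \<in> A) \<and>
     (\<forall>p\<in>A. \<forall>q. snd q \<notin> m \<longrightarrow> loc_eq m p q \<longrightarrow> q \<in> A)"

definition loc_principal :: "'a::comm_ring_1 set \<Rightarrow> ('a \<times> 'a) set \<Rightarrow> bool" where
  "loc_principal m A \<longleftrightarrow> (\<exists>g v. v \<notin> m \<and>
     A = {q. snd q \<notin> m \<and> (\<exists>c u. u \<notin> m \<and> loc_eq m q (c * g, u * v))})"

definition locally_PIR :: "'a::comm_ring_1 itself \<Rightarrow> bool" where
  "locally_PIR _ \<longleftrightarrow> (\<forall>m::'a set. is_maximal_ideal m \<longrightarrow>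
     (\<forall>A. loc_ideal m A \<longrightarrow> loc_principal m A))"

inductive_set zspan :: "'a::ab_group_add set \<Rightarrow> 'a set" for G where
  zero: "0 \<in> zspan G"
| gen: "g \<in> G \<Longrightarrow> g \<in> zspan G"
| diff: "a \<in> zspan G \<Longrightarrow> b \<in> zspan G \<Longrightarrow> a - b \<in> zspan G"

(* Relations of S \<otimes>_k S on the free abelian group on S \<times> S, where the k-algebra
  structure of S is given by the ring homomorphism sigma :: 'k => 's. *)
definition tensor2_rels :: "('k \<Rightarrow> 's::comm_ring_1) \<Rightarrow> (('s \<times> 's) \<Rightarrow>\<^sub>0 int) set" where
  "tensor2_rels \<sigma> =
     {frag_of (x + x', y) - frag_of (x, y) - frag_of (x', y) | x x' y. True} \<union>
     {frag_of (x, y + y') - frag_of (x, y) - frag_of (x, y') | x y y'. True} \<union>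
     {frag_of (\<sigma> c * x, y) - frag_of (x, \<sigma> c * y) | c x y. True}"

definition quot_tensor2_rels :: "('k \<Rightarrow> 's::comm_ring_1) \<Rightarrow> 's set \<Rightarrow> (('s \<times> 's) \<Rightarrow>\<^sub>0 int) set" where
  "quot_tensor2_rels \<sigma> J = tensor2_rels \<sigma> \<union> {frag_of (x, y) | x y. x \<in> J \<or> y \<in> J}"

definition hoch_b2 :: "(('s::comm_ring_1 \<times> 's \<times> 's) \<Rightarrow>\<^sub>0 int) \<Rightarrow> (('s \<times> 's) \<Rightarrow>\<^sub>0 int)" where
  "hoch_b2 = frag_extend (\<lambda>(x, y, z). frag_of (x * y, z) - frag_of (x, y * z) + frag_of (z * x, y))"

(* Relations of J \<otimes>_S \<Omega>_{S/R} on the free abelian group on pairs (x, s), x \<in> J,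
  where (x, s) stands for x \<otimes> ds (every element of J \<otimes>_S \<Omega> is a sum of such;
  S-scalars are absorbed into the J-factor). *)
definition omega_tensor_rels :: "('r \<Rightarrow> 's::comm_ring_1) \<Rightarrow> 's set \<Rightarrow> (('s \<times> 's) \<Rightarrow>\<^sub>0 int) set" where
  "omega_tensor_rels f J =
     {frag_of (x + x', a) - frag_of (x, a) - frag_of (x', a) | x x' a. x \<in> J \<and> x' \<in> J} \<union>
     {frag_of (x, a + b) - frag_of (x, a) - frag_of (x, b) | x a b. x \<in> J} \<union>
     {frag_of (x, a * b) - frag_of (x * a, b) - frag_of (x * b, a) | x a b. x \<in> J} \<union>
     {frag_of (x, f r) | x r. x \<in> J}"

end

theory Submission
  imports Defs "HOL-Computational_Algebra.Polynomial"
begin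

lemma zspan_add: "a \<in> zspan G \<Longrightarrow> b \<in> zspan G \<Longrightarrow> a + b \<in> zspan G"
proof -
  assume a: "a \<in> zspan G" and b: "b \<in> zspan G"
  have "0 - b \<in> zspan G" by (rule zspan.diff[OF zspan.zero b])
  from zspan.diff[OF a this] show ?thesis by simp
qed

lemma zspan_uminus: "a \<in> zspan G \<Longrightarrow> - a \<in> zspan G"
  using zspan.diff[OF zspan.zero, of a G] by simp

lemma zspan_cmul: "a \<in> zspan G \<Longrightarrow> frag_cmul k a \<in> zspan G"
  by (rule frag_closure_minus_cmul[where P="\<lambda>x. x \<in> zspan G"]) (auto intro: zspan.intros)

lemma zspan_sum: "(\<And>i. i \<in> A \<Longrightarrow> g i \<in> zspan G) \<Longrightarrow> sum g A \<in> zspan G"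
  by (induction A rule: infinite_finite_induct) (auto intro: zspan.intros zspan_add)

lemma zspan_mono: "a \<in> zspan G \<Longrightarrow> G \<subseteq> H \<Longrightarrow> a \<in> zspan H"
  by (induction rule: zspan.induct) (auto intro: zspan.intros)

lemma frag_cmul_int_nat: "frag_cmul (int (Suc n)) a = frag_cmul (int n) a + a"
  by (simp add: frag_cmul_distrib)

lemma ring_hom_basics:
  assumes "is_ring_hom h"
  shows "h 0 = 0" "h 1 = 1" "h (a + b) = h a + h b" "h (a * b) = h a * h b"
    "h (- a) = - h a" "h (a - b) = h a - h b"
proof -
  have add: "\<And>a b. h (a + b) = h a + h b" and mul: "\<And>a b. h (a * b) = h a * h b" and one: "h 1 = 1"
    using assms unfolding is_ring_hom_def by auto
  have z: "h 0 = 0" using add[of 0 0] by simp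
  have n: "\<And>a. h (- a) = - h a" using add z by (metis add.right_inverse add_eq_0_iff)
  show "h 0 = 0" "h 1 = 1" "h (a + b) = h a + h b" "h (a * b) = h a * h b" "h (- a) = - h a"
    using z one add mul n by auto
  show "h (a - b) = h a - h b" using add n by (metis diff_conv_add_uminus)
qed

lemma ideal_basics:
  assumes "is_ideal A"
  shows "0 \<in> A" "a \<in> A \<Longrightarrow> b \<in> A \<Longrightarrow> a + b \<in> A" "a \<in> A \<Longrightarrow> r * a \<in> A"
    "a \<in> A \<Longrightarrow> a * r \<in> A" "a \<in> A \<Longrightarrow> - a \<in> A" "a \<in> A \<Longrightarrow> b \<in> A \<Longrightarrow> a - b \<in> A"
proof -
  have z: "0 \<in> A" and ad: "\<And>a b. a \<in> A \<Longrightarrow> b \<in> A \<Longrightarrow> a + b \<in> A"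
    and ml: "\<And>r a. a \<in> A \<Longrightarrow> r * a \<in> A"
    using assms unfolding is_ideal_def by auto
  show "0 \<in> A" by (rule z)
  show "a \<in> A \<Longrightarrow> b \<in> A \<Longrightarrow> a + b \<in> A" by (rule ad)
  show "a \<in> A \<Longrightarrow> r * a \<in> A" by (rule ml)
  show "a \<in> A \<Longrightarrow> a * r \<in> A" using ml by (metis mult.commute)
  show ng: "a \<in> A \<Longrightarrow> - a \<in> A" using ml[of a "-1"] by simp
  show "a \<in> A \<Longrightarrow> b \<in> A \<Longrightarrow> a - b \<in> A" using ad ml[of b "-1"] by (metis diff_conv_add_uminus mult_minus1)
qed

lemma ideal_sum: "is_ideal A \<Longrightarrow> (\<And>i. i \<in> X \<Longrightarrow> g i \<in> A) \<Longrightarrow> sum g X \<in> A"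
  by (induction X rule: infinite_finite_induct) (auto intro: ideal_basics)

lemma maximal_basics:
  assumes "is_maximal_ideal m"
  shows "is_ideal m" "1 \<notin> m" "a \<notin> m \<Longrightarrow> b \<notin> m \<Longrightarrow> a * b \<notin> m"
proof -
  show im: "is_ideal m" using assms unfolding is_maximal_ideal_def by auto
  show o: "1 \<notin> m"
  proof
    assume "1 \<in> m"
    then have "\<And>r. r \<in> m" using ideal_basics(3)[OF im, of 1] by (metis mult.right_neutral)
    then show False using assms unfolding is_maximal_ideal_def by auto
  qed
  assume a: "a \<notin> m" and b: "b \<notin> m"
  show "a * b \<notin> m"
  proof
    assume ab: "a * b \<in> m"
    define K where "K = {x + r * a | x r. x \<in> m}"
    have "is_ideal K" unfolding is_ideal_def K_def
    proof (intro conjI ballI allI)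
      show "0 \<in> {x + r * a |x r. x \<in> m}" using ideal_basics(1)[OF im] by (auto intro!: exI[of _ 0])
    next
      fix u v assume "u \<in> {x + r * a |x r. x \<in> m}" "v \<in> {x + r * a |x r. x \<in> m}"
      then obtain x1 r1 x2 r2 where "u = x1 + r1 * a" "x1 \<in> m" "v = x2 + r2 * a" "x2 \<in> m" by auto
      then have "u + v = (x1 + x2) + (r1 + r2) * a" "x1 + x2 \<in> m"
        by (auto simp: algebra_simps ideal_basics(2)[OF im])
      then show "u + v \<in> {x + r * a |x r. x \<in> m}" by blast
    next
      fix s u assume "u \<in> {x + r * a |x r. x \<in> m}"
      then obtain x1 r1 where "u = x1 + r1 * a" "x1 \<in> m" by auto
      then have "s * u = (s * x1) + (s * r1) * a" "s * x1 \<in> m"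
        by (auto simp: algebra_simps ideal_basics(3)[OF im])
      then show "s * u \<in> {x + r * a |x r. x \<in> m}" by blast
    qed
    moreover have "m \<subseteq> K"
    proof
      fix x assume "x \<in> m"
      moreover have "x = x + 0 * a" by simp
      ultimately show "x \<in> K" unfolding K_def by blast
    qed
    moreover have "a \<in> K"
    proof -
      have "a = 0 + 1 * a" by simp
      then show ?thesis unfolding K_def using ideal_basics(1)[OF im] by blast
    qed
    ultimately have "K = UNIV" using assms a unfolding is_maximal_ideal_def by blast
    then have "1 \<in> K" by simp
    then obtain x r where "1 = x + r * a" "x \<in> m" unfolding K_def by blast
    then have "b = x * b + r * (a * b)" by (metis mult.assoc mult_1 distrib_right)
    moreover have "x * b + r * (a * b) \<in> m"
      using ab \<open>x \<in> m\<close> ideal_basics(2)[OF im] ideal_basics(4)[OF im] ideal_basics(3)[OF im] by blast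
    ultimately show False using b by simp
  qed
qed

lemma maximal_prod: "is_maximal_ideal m \<Longrightarrow> (\<And>i. i \<in> X \<Longrightarrow> g i \<notin> m) \<Longrightarrow> prod g X \<notin> m"
  by (induction X rule: infinite_finite_induct) (auto simp: maximal_basics)

lemma exists_maximal:
  fixes A :: "'a::comm_ring_1 set"
  assumes "is_ideal A" "1 \<notin> A"
  shows "\<exists>m. is_maximal_ideal m \<and> A \<subseteq> m"
proof -
  define C where "C = {K. is_ideal K \<and> A \<subseteq> K \<and> (1::'a) \<notin> K}"
  have "\<forall>Ch\<in>chains C. \<exists>U\<in>C. \<forall>X\<in>Ch. X \<subseteq> U"
  proof
    fix Ch assume ch: "Ch \<in> chains C"
    show "\<exists>U\<in>C. \<forall>X\<in>Ch. X \<subseteq> U"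
    proof (cases "Ch = {}")
      case True then show ?thesis using assms unfolding C_def by auto
    next
      case False
      have sub: "Ch \<subseteq> C" and lin: "\<And>X Y. X \<in> Ch \<Longrightarrow> Y \<in> Ch \<Longrightarrow> X \<subseteq> Y \<or> Y \<subseteq> X"
        using ch unfolding chains_def chain_subset_def by auto
      have "is_ideal (\<Union>Ch)" unfolding is_ideal_def
      proof (intro conjI ballI allI)
        obtain X where "X \<in> Ch" using False by auto
        then show "0 \<in> \<Union>Ch" using sub unfolding C_def by (auto dest: ideal_basics(1))
      next
        fix a b assume "a \<in> \<Union>Ch" "b \<in> \<Union>Ch"
        then obtain X Y where "a \<in> X" "X \<in> Ch" "b \<in> Y" "Y \<in> Ch" by auto
        then show "a + b \<in> \<Union>Ch" using lin[of X Y] sub unfolding C_def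
          by (metis (no_types, lifting) UnionI in_mono ideal_basics(2) mem_Collect_eq subsetD)
      next
        fix r a assume "a \<in> \<Union>Ch"
        then obtain X where "a \<in> X" "X \<in> Ch" by auto
        then show "r * a \<in> \<Union>Ch" using sub unfolding C_def by (auto dest: ideal_basics(3))
      qed
      moreover have "A \<subseteq> \<Union>Ch" using False sub unfolding C_def by auto
      moreover have "1 \<notin> \<Union>Ch" using sub unfolding C_def by auto
      ultimately show ?thesis unfolding C_def by auto
    qed
  qed
  from Zorn_Lemma2[OF this] obtain M where M: "M \<in> C" "\<And>X. X \<in> C \<Longrightarrow> M \<subseteq> X \<Longrightarrow> X = M" by auto
  have "is_maximal_ideal M" unfolding is_maximal_ideal_def
  proof (intro conjI allI impI)
    show "is_ideal M" using M unfolding C_def by auto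
    show "M \<noteq> UNIV" using M unfolding C_def by auto
    fix K assume K: "is_ideal K \<and> M \<subseteq> K"
    show "K = M \<or> K = UNIV"
    proof (cases "1 \<in> K")
      case True
      then have "\<And>r. r \<in> K" using ideal_basics(3)[of K 1] K by (metis mult.right_neutral)
      then show ?thesis by auto
    next
      case False then show ?thesis using M K unfolding C_def by auto
    qed
  qed
  then show ?thesis using M unfolding C_def by auto
qed

abbreviation swp :: "(('s \<times> 's) \<Rightarrow>\<^sub>0 int) \<Rightarrow> (('s \<times> 's) \<Rightarrow>\<^sub>0 int)" where
  "swp \<equiv> frag_extend (\<lambda>(r, x). frag_of (x, r))"

locale hh =
  fixes \<sigma> :: "'k::field_char_0 \<Rightarrow> 's::comm_ring_1" and f :: "'r::comm_ring_1 \<Rightarrow> 's" and J :: "'s set"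
  assumes hom_sigma: "is_ring_hom \<sigma>" and hom_f: "is_ring_hom f"
    and sig_f: "\<And>c. \<sigma> c \<in> range f"
    and J_ideal: "is_ideal J" and J_f: "J \<subseteq> range f"
    and loc_PIR: "locally_PIR TYPE('s)"
    and fin_dim: "\<exists>B::'s set. finite B \<and> (\<forall>s. \<exists>c::'s \<Rightarrow> 'k. s - (\<Sum>b\<in>B. \<sigma> (c b) * b) \<in> J)"
begin

definition Nr :: "(('s \<times> 's) \<Rightarrow>\<^sub>0 int) set" where "Nr = zspan (omega_tensor_rels f J)"

definition TT :: "(('s \<times> 's) \<Rightarrow>\<^sub>0 int) set" where
  "TT = {\<omega>. \<exists>z :: ('s \<times> 's \<times> 's) \<Rightarrow>\<^sub>0 int.
              hoch_b2 z \<in> zspan (quot_tensor2_rels \<sigma> J) \<and>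
              (\<exists>P Q :: ('s \<times> 's) \<Rightarrow>\<^sub>0 int.
                 (\<forall>t\<in>Poly_Mapping.keys P. fst t \<in> J) \<and> (\<forall>t\<in>Poly_Mapping.keys Q. snd t \<in> J) \<and>
                 hoch_b2 z - (P + Q) \<in> zspan (tensor2_rels \<sigma>) \<and>
                 (P - swp Q) - \<omega> \<in> Nr)}"

lemmas sig = ring_hom_basics[OF hom_sigma]
lemmas fh = ring_hom_basics[OF hom_f]
lemmas Ji = ideal_basics[OF J_ideal]

lemma Nr_0: "0 \<in> Nr" unfolding Nr_def by (rule zspan.zero)
lemma Nr_add: "a \<in> Nr \<Longrightarrow> b \<in> Nr \<Longrightarrow> a + b \<in> Nr" unfolding Nr_def by (rule zspan_add)
lemma Nr_diff: "a \<in> Nr \<Longrightarrow> b \<in> Nr \<Longrightarrow> a - b \<in> Nr" unfolding Nr_def by (rule zspan.diff)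
lemma Nr_uminus: "a \<in> Nr \<Longrightarrow> - a \<in> Nr" unfolding Nr_def by (rule zspan_uminus)
lemma Nr_cmul: "a \<in> Nr \<Longrightarrow> frag_cmul k a \<in> Nr" unfolding Nr_def by (rule zspan_cmul)
lemma Nr_gen: "a \<in> omega_tensor_rels f J \<Longrightarrow> a \<in> Nr" unfolding Nr_def by (rule zspan.gen)

lemma Nr_sum: "(\<And>i. i \<in> A \<Longrightarrow> g i \<in> Nr) \<Longrightarrow> sum g A \<in> Nr" unfolding Nr_def by (rule zspan_sum)

lemma br_addL: "x \<in> J \<Longrightarrow> x' \<in> J \<Longrightarrow> frag_of (x + x', a) - frag_of (x, a) - frag_of (x', a) \<in> Nr"
  by (rule Nr_gen) (unfold omega_tensor_rels_def, blast)
lemma br_addR: "x \<in> J \<Longrightarrow> frag_of (x, a + b) - frag_of (x, a) - frag_of (x, b) \<in> Nr"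
  by (rule Nr_gen) (unfold omega_tensor_rels_def, blast)
lemma br_leib: "x \<in> J \<Longrightarrow> frag_of (x, a * b) - frag_of (x * a, b) - frag_of (x * b, a) \<in> Nr"
  by (rule Nr_gen) (unfold omega_tensor_rels_def, blast)
lemma br_f: "x \<in> J \<Longrightarrow> frag_of (x, f r) \<in> Nr"
  by (rule Nr_gen) (unfold omega_tensor_rels_def, blast)

lemma br_rng: "x \<in> J \<Longrightarrow> y \<in> range f \<Longrightarrow> frag_of (x, y) \<in> Nr"
  using br_f by auto
lemma br_J: "x \<in> J \<Longrightarrow> y \<in> J \<Longrightarrow> frag_of (x, y) \<in> Nr"
  using br_rng J_f by auto
lemma br_sig: "x \<in> J \<Longrightarrow> frag_of (x, \<sigma> c) \<in> Nr"
  using br_rng sig_f by auto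
lemma br_one: "x \<in> J \<Longrightarrow> frag_of (x, 1) \<in> Nr"
  using br_f[of x 1] fh by simp
lemma br_zeroL: "frag_of (0, a) \<in> Nr"
  using Nr_uminus[OF br_addL[of 0 0 a]] Ji(1) by simp
lemma br_JJ: "x \<in> J \<Longrightarrow> y \<in> J \<Longrightarrow> frag_of (x * y, a) \<in> Nr"
proof -
  assume x: "x \<in> J" and y: "y \<in> J"
  have "frag_of (x, y * a) - frag_of (x * y, a) - frag_of (x * a, y) \<in> Nr" by (rule br_leib[OF x])
  moreover have "frag_of (x, y * a) \<in> Nr" using x y by (intro br_J Ji)
  moreover have "frag_of (x * a, y) \<in> Nr" using x y by (intro br_J Ji)
  ultimately have "frag_of (x, y * a) - (frag_of (x, y * a) - frag_of (x * y, a) - frag_of (x * a, y)) - frag_of (x * a, y) \<in> Nr"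
    using Nr_diff by blast
  then show ?thesis by simp
qed

lemma br_scal: "x \<in> J \<Longrightarrow> frag_of (x, \<sigma> c * a) - frag_of (x * \<sigma> c, a) \<in> Nr"
proof -
  assume x: "x \<in> J"
  have "frag_of (x, \<sigma> c * a) - frag_of (x * \<sigma> c, a) - frag_of (x * a, \<sigma> c) \<in> Nr" by (rule br_leib[OF x])
  moreover have "frag_of (x * a, \<sigma> c) \<in> Nr" using x by (intro br_sig Ji)
  ultimately show ?thesis using Nr_add by fastforce
qed

lemma br_cmul: "x \<in> J \<Longrightarrow> frag_cmul (int n) (frag_of (x, a)) - frag_of (of_nat n * x, a) \<in> Nr"
proof (induction n)
  case 0 then show ?case using Nr_uminus[OF br_zeroL] by simp
next
  case (Suc n)
  have "frag_of (of_nat n * x + x, a) - frag_of (of_nat n * x, a) - frag_of (x, a) \<in> Nr"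
    using Suc.prems by (intro br_addL Ji) auto
  from Nr_diff[OF Suc.IH[OF Suc.prems] this]
  have "frag_cmul (int n) (frag_of (x, a)) + frag_of (x, a) - frag_of (of_nat n * x + x, a) \<in> Nr"
    by (simp add: algebra_simps)
  moreover have "of_nat (Suc n) * x = of_nat n * x + x" by (simp add: algebra_simps)
  ultimately show ?case by (simp add: frag_cmul_distrib add.commute)
qed

lemma br_sumR: "x \<in> J \<Longrightarrow> frag_of (x, sum g A) - (\<Sum>i\<in>A. frag_of (x, g i)) \<in> Nr"
proof (induction A rule: infinite_finite_induct)
  case (infinite A) then show ?case using br_one br_f[of x 0] fh by simp
next
  case empty then show ?case using br_f[of x 0] fh by simp
next
  case (insert i A)
  have "frag_of (x, g i + sum g A) - frag_of (x, g i) - frag_of (x, sum g A) \<in> Nr" by (rule br_addR[OF insert.prems])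
  from Nr_add[OF this insert.IH[OF insert.prems]] show ?case using insert by (simp add: algebra_simps)
qed

lemma br_sumL: "(\<And>i. i \<in> A \<Longrightarrow> g i \<in> J) \<Longrightarrow> frag_of (sum g A, a) - (\<Sum>i\<in>A. frag_of (g i, a)) \<in> Nr"
proof (induction A rule: infinite_finite_induct)
  case (infinite A) then show ?case using br_zeroL Nr_uminus by simp
next
  case empty then show ?case using br_zeroL Nr_uminus by simp
next
  case (insert i A)
  have "frag_of (g i + sum g A, a) - frag_of (g i, a) - frag_of (sum g A, a) \<in> Nr"
    using insert by (intro br_addL ideal_sum[OF J_ideal]) auto
  from Nr_add[OF this insert.IH] show ?case using insert by (simp add: algebra_simps)
qed

lemma hoch_b2_diff: "hoch_b2 (a - b) = hoch_b2 a - hoch_b2 b"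
  unfolding hoch_b2_def by (rule frag_extend_diff)

lemma TT_0: "0 \<in> TT"
  unfolding TT_def mem_Collect_eq
  by (rule exI[of _ 0]) (auto simp: hoch_b2_def intro!: zspan.zero exI[of _ 0] Nr_0)

lemma TT_diff: "a \<in> TT \<Longrightarrow> b \<in> TT \<Longrightarrow> a - b \<in> TT"
proof -
  assume "a \<in> TT" "b \<in> TT"
  then obtain z1 P1 Q1 z2 P2 Q2 where
    1: "hoch_b2 z1 \<in> zspan (quot_tensor2_rels \<sigma> J)" "\<forall>t\<in>Poly_Mapping.keys P1. fst t \<in> J"
       "\<forall>t\<in>Poly_Mapping.keys Q1. snd t \<in> J" "hoch_b2 z1 - (P1 + Q1) \<in> zspan (tensor2_rels \<sigma>)"
       "(P1 - swp Q1) - a \<in> Nr" and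
    2: "hoch_b2 z2 \<in> zspan (quot_tensor2_rels \<sigma> J)" "\<forall>t\<in>Poly_Mapping.keys P2. fst t \<in> J"
       "\<forall>t\<in>Poly_Mapping.keys Q2. snd t \<in> J" "hoch_b2 z2 - (P2 + Q2) \<in> zspan (tensor2_rels \<sigma>)"
       "(P2 - swp Q2) - b \<in> Nr"
    unfolding TT_def by blast
  show ?thesis unfolding TT_def
  proof (intro CollectI exI conjI)
    show "hoch_b2 (z1 - z2) \<in> zspan (quot_tensor2_rels \<sigma> J)"
      using 1 2 by (simp add: hoch_b2_diff zspan.diff)
    show "\<forall>t\<in>Poly_Mapping.keys (P1 - P2). fst t \<in> J" using 1 2 keys_diff[of P1 P2] by blast
    show "\<forall>t\<in>Poly_Mapping.keys (Q1 - Q2). snd t \<in> J" using 1 2 keys_diff[of Q1 Q2] by blast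
    have "hoch_b2 (z1 - z2) - (P1 - P2 + (Q1 - Q2)) = (hoch_b2 z1 - (P1 + Q1)) - (hoch_b2 z2 - (P2 + Q2))"
      by (simp add: hoch_b2_diff algebra_simps)
    then show "hoch_b2 (z1 - z2) - (P1 - P2 + (Q1 - Q2)) \<in> zspan (tensor2_rels \<sigma>)"
      using 1 2 zspan.diff by metis
    have "P1 - P2 - swp (Q1 - Q2) - (a - b) = ((P1 - swp Q1) - a) - ((P2 - swp Q2) - b)"
      by (simp add: frag_extend_diff algebra_simps)
    then show "P1 - P2 - swp (Q1 - Q2) - (a - b) \<in> Nr" using 1 2 Nr_diff by metis
  qed
qed

lemma TT_uminus: "a \<in> TT \<Longrightarrow> - a \<in> TT"
  using TT_diff[OF TT_0] by fastforce
lemma TT_add: "a \<in> TT \<Longrightarrow> b \<in> TT \<Longrightarrow> a + b \<in> TT"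
  using TT_diff[OF _ TT_uminus] by fastforce

lemma TT_cong: "a \<in> TT \<Longrightarrow> a - b \<in> Nr \<Longrightarrow> b \<in> TT"
proof -
  assume "a \<in> TT" "a - b \<in> Nr"
  then obtain z P Q where 1: "hoch_b2 z \<in> zspan (quot_tensor2_rels \<sigma> J)" "\<forall>t\<in>Poly_Mapping.keys P. fst t \<in> J"
       "\<forall>t\<in>Poly_Mapping.keys Q. snd t \<in> J" "hoch_b2 z - (P + Q) \<in> zspan (tensor2_rels \<sigma>)"
       "(P - swp Q) - a \<in> Nr" unfolding TT_def by blast
  have "(P - swp Q) - b = ((P - swp Q) - a) + (a - b)" by simp
  then have "(P - swp Q) - b \<in> Nr" using 1 \<open>a - b \<in> Nr\<close> Nr_add by metis
  then show ?thesis using 1 unfolding TT_def by blast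
qed

lemma TT_Nr: "a \<in> Nr \<Longrightarrow> a \<in> TT"
  using TT_cong[OF TT_0, of a] Nr_uminus by fastforce

lemma TT_sum: "(\<And>i. i \<in> A \<Longrightarrow> g i \<in> TT) \<Longrightarrow> sum g A \<in> TT"
  by (induction A rule: infinite_finite_induct) (auto intro: TT_0 TT_add)

lemma TT_cmul: "a \<in> TT \<Longrightarrow> frag_cmul k a \<in> TT"
  by (rule frag_closure_minus_cmul[where P="\<lambda>x. x \<in> TT"]) (auto intro: TT_0 TT_diff)

end

lemma sum_const_frag: "(\<Sum>i<n. (F :: 'a \<Rightarrow>\<^sub>0 int)) = frag_cmul (int n) F"
  by (induction n) (simp_all add: frag_cmul_distrib add.commute)

lemma hoch_b2_of: "hoch_b2 (frag_of (x, y, w)) = frag_of (x * y, w) - frag_of (x, y * w) + frag_of (w * x, y)"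
  unfolding hoch_b2_def by simp

lemma hoch_b2_sum: "finite A \<Longrightarrow> hoch_b2 (sum g A) = (\<Sum>i\<in>A. hoch_b2 (g i))"
  unfolding hoch_b2_def by (simp add: frag_extend_sum o_def)

context hh begin

lemma quot_gen: "x \<in> J \<or> y \<in> J \<Longrightarrow> frag_of (x, y) \<in> zspan (quot_tensor2_rels \<sigma> J)"
  by (rule zspan.gen) (auto simp: quot_tensor2_rels_def)

lemma cycle:
  assumes nJ: "n ^ Suc d \<in> J" and aJ: "a * n ^ d \<in> J"
  shows "frag_cmul (int (Suc d)) (frag_of (a * n ^ d, n)) + frag_of (n ^ Suc d, a) \<in> TT"
proof -
  define z where "z = (\<Sum>i<Suc d. frag_of (a * n ^ i, n ^ (d - i), n))"
  define F0 where "F0 = frag_of (a * n ^ d, n)"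
  define G where "G i = frag_of (a * n ^ i, n ^ (Suc d - i))" for i
  have trm: "hoch_b2 (frag_of (a * n ^ i, n ^ (d - i), n)) = F0 - G i + G (Suc i)" if "i < Suc d" for i
  proof -
    have 1: "a * n ^ i * n ^ (d - i) = a * n ^ d" using that by (simp add: mult.assoc power_add[symmetric])
    have 2: "n ^ (d - i) * n = n ^ (Suc d - i)" using that
      by (metis Suc_diff_le less_Suc_eq_le power_Suc2)
    have 3: "n * (a * n ^ i) = a * n ^ Suc i" by (simp add: algebra_simps)
    have 4: "n ^ (d - i) = n ^ (Suc d - Suc i)" by simp
    show ?thesis unfolding hoch_b2_of F0_def G_def by (subst 1, subst 2, subst 3, subst 4, simp)
  qed
  have "hoch_b2 z = (\<Sum>i<Suc d. F0 - G i + G (Suc i))"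
    unfolding z_def by (simp only: hoch_b2_sum[OF finite_lessThan]) (rule sum.cong[OF refl], rule trm, simp)
  also have "\<dots> = (\<Sum>i<Suc d. F0) + (\<Sum>i<Suc d. G (Suc i) - G i)"
    by (simp add: sum.distrib[symmetric] algebra_simps)
  also have "\<dots> = frag_cmul (int (Suc d)) F0 + G (Suc d) - G 0"
    by (simp only: sum_const_frag sum_lessThan_telescope) (simp add: algebra_simps)
  finally have hz: "hoch_b2 z = frag_cmul (int (Suc d)) F0 + G (Suc d) - G 0" .
  have G0: "G 0 = frag_of (a, n ^ Suc d)" and GS: "G (Suc d) = frag_of (a * n ^ Suc d, 1)"
    unfolding G_def by simp_all
  define P where "P = frag_cmul (int (Suc d)) F0 + G (Suc d)"
  define Q where "Q = - G 0"
  have aJ2: "a * n ^ Suc d \<in> J" using Ji(3)[OF nJ, of a] .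
  show ?thesis unfolding TT_def mem_Collect_eq
  proof (intro exI conjI)
    show "hoch_b2 z \<in> zspan (quot_tensor2_rels \<sigma> J)"
      unfolding hz G0 GS F0_def
    proof (rule zspan.diff[OF zspan_add[OF zspan_cmul]])
      show "frag_of (a * n ^ d, n) \<in> zspan (quot_tensor2_rels \<sigma> J)" using aJ by (intro quot_gen) simp
      show "frag_of (a * n ^ Suc d, 1) \<in> zspan (quot_tensor2_rels \<sigma> J)" using aJ2 by (intro quot_gen) simp
      show "frag_of (a, n ^ Suc d) \<in> zspan (quot_tensor2_rels \<sigma> J)" using nJ by (intro quot_gen) simp
    qed
    show "\<forall>t\<in>Poly_Mapping.keys P. fst t \<in> J"
    proof
      fix t assume "t \<in> Poly_Mapping.keys P"
      then have "t \<in> Poly_Mapping.keys (frag_cmul (int (Suc d)) F0) \<union> Poly_Mapping.keys (G (Suc d))"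
        unfolding P_def by (rule subsetD[OF keys_add])
      then show "fst t \<in> J" unfolding F0_def GS using aJ aJ2 by auto
    qed
    show "\<forall>t\<in>Poly_Mapping.keys Q. snd t \<in> J" unfolding Q_def G0 using nJ by simp
    show "hoch_b2 z - (P + Q) \<in> zspan (tensor2_rels \<sigma>)"
      unfolding hz P_def Q_def by (simp add: zspan.zero)
    have "P - swp Q - (frag_cmul (int (Suc d)) (frag_of (a * n ^ d, n)) + frag_of (n ^ Suc d, a)) = G (Suc d)"
      unfolding P_def Q_def G0 F0_def by (simp add: frag_extend_minus)
    then show "P - swp Q - (frag_cmul (int (Suc d)) (frag_of (a * n ^ d, n)) + frag_of (n ^ Suc d, a)) \<in> Nr"
      using br_one[OF aJ2] GS by (simp only:)
  qed
qed

end

context hh begin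

definition ev :: "'k poly \<Rightarrow> 's \<Rightarrow> 's" where "ev p y = poly (map_poly \<sigma> p) y"

lemma ev_pCons: "ev (pCons a p) y = \<sigma> a + y * ev p y"
  unfolding ev_def by (simp add: map_poly_pCons sig)

lemma ev_0[simp]: "ev 0 y = 0" unfolding ev_def by simp

lemma map_poly_sig_add: "map_poly \<sigma> (p + q) = map_poly \<sigma> p + map_poly \<sigma> q"
  by (rule poly_eqI) (simp add: coeff_map_poly sig)
lemma map_poly_sig_diff: "map_poly \<sigma> (p - q) = map_poly \<sigma> p - map_poly \<sigma> q"
  by (rule poly_eqI) (simp add: coeff_map_poly sig)

lemma ev_add: "ev (p + q) y = ev p y + ev q y"
  unfolding ev_def by (simp add: map_poly_sig_add)
lemma ev_diff: "ev (p - q) y = ev p y - ev q y"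
  unfolding ev_def by (simp add: map_poly_sig_diff)
lemma ev_monom: "ev (monom c n) y = \<sigma> c * y ^ n"
  unfolding ev_def by (simp add: map_poly_monom sig poly_monom)
lemma ev_sum: "ev (sum g A) y = (\<Sum>i\<in>A. ev (g i) y)"
  by (induction A rule: infinite_finite_induct) (simp_all add: ev_add)

lemma ev_pderiv_pCons: "ev (pderiv (pCons a p)) y = ev p y + y * ev (pderiv p) y"
  by (simp add: pderiv_pCons ev_add ev_pCons sig)

lemma br_poly: "x \<in> J \<Longrightarrow> frag_of (x, ev p y) - frag_of (x * ev (pderiv p) y, y) \<in> Nr"
proof (induction p arbitrary: x rule: pCons_induct)
  case 0
  have "frag_of (x, f 0) \<in> Nr" by (rule br_f[OF 0])
  then have "frag_of (x, 0) - frag_of (0, y) \<in> Nr" using br_zeroL Nr_diff fh(1) by metis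
  then show ?case by simp
next
  case (pCons a p)
  define P where "P = ev p y"
  define P' where "P' = ev (pderiv p) y"
  have x: "x \<in> J" by fact
  have xy: "x * y \<in> J" using x Ji by auto
  have A: "frag_of (x, \<sigma> a + y * P) - frag_of (x, \<sigma> a) - frag_of (x, y * P) \<in> Nr" by (rule br_addR[OF x])
  have B: "frag_of (x, \<sigma> a) \<in> Nr" by (rule br_sig[OF x])
  have C: "frag_of (x, y * P) - frag_of (x * y, P) - frag_of (x * P, y) \<in> Nr" by (rule br_leib[OF x])
  have D: "frag_of (x * y, P) - frag_of (x * y * P', y) \<in> Nr" using pCons.IH[OF xy] unfolding P_def P'_def .
  have E: "frag_of (x * y * P' + x * P, y) - frag_of (x * y * P', y) - frag_of (x * P, y) \<in> Nr"
    using x by (intro br_addL) (auto intro: Ji)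
  have "frag_of (x, \<sigma> a + y * P) - frag_of (x * y * P' + x * P, y) =
    (frag_of (x, \<sigma> a + y * P) - frag_of (x, \<sigma> a) - frag_of (x, y * P)) + frag_of (x, \<sigma> a)
    + (frag_of (x, y * P) - frag_of (x * y, P) - frag_of (x * P, y))
    + (frag_of (x * y, P) - frag_of (x * y * P', y))
    - (frag_of (x * y * P' + x * P, y) - frag_of (x * y * P', y) - frag_of (x * P, y))"
    by (simp add: algebra_simps)
  also have "\<dots> \<in> Nr" by (rule Nr_diff[OF Nr_add[OF Nr_add[OF Nr_add[OF A B] C] D] E])
  finally have "frag_of (x, \<sigma> a + y * P) - frag_of (x * y * P' + x * P, y) \<in> Nr" .
  moreover have "x * ev (pderiv (pCons a p)) y = x * y * P' + x * P"
    unfolding ev_pderiv_pCons P_def P'_def by (simp add: algebra_simps)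
  ultimately show ?case unfolding ev_pCons P_def by simp
qed

lemma sig_nat: "\<sigma> (of_nat m) = of_nat m"
  by (induction m) (simp_all add: sig)

lemma br_pow: "x \<in> J \<Longrightarrow> frag_of (x, y ^ Suc n) - frag_cmul (int (Suc n)) (frag_of (x * y ^ n, y)) \<in> Nr"
proof -
  assume x: "x \<in> J"
  have 1: "frag_of (x, ev (monom 1 (Suc n)) y) - frag_of (x * ev (pderiv (monom 1 (Suc n))) y, y) \<in> Nr"
    by (rule br_poly[OF x])
  have e1: "ev (monom 1 (Suc n)) y = y ^ Suc n" by (simp add: ev_monom sig)
  have e2: "x * ev (pderiv (monom 1 (Suc n))) y = of_nat (Suc n) * (x * y ^ n)"
    by (simp add: pderiv_monom ev_monom sig_nat del: of_nat_Suc)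
  have 2: "frag_cmul (int (Suc n)) (frag_of (x * y ^ n, y)) - frag_of (of_nat (Suc n) * (x * y ^ n), y) \<in> Nr"
    using x by (intro br_cmul) (auto intro: Ji)
  have 1: "frag_of (x, y ^ Suc n) - frag_of (of_nat (Suc n) * (x * y ^ n), y) \<in> Nr" using 1 unfolding e1 e2 .
  from Nr_diff[OF 1 2] show ?thesis by (simp only: diff_diff_eq2 diff_add_cancel)
qed

lemma findim_poly: "\<exists>p. p \<noteq> 0 \<and> ev p y \<in> J"
proof -
  interpret V: vector_space "\<lambda>c v. \<sigma> c * v"
    by unfold_locales (simp_all add: sig algebra_simps)
  obtain B where B: "finite B" "\<And>s. \<exists>c. s - (\<Sum>b\<in>B. \<sigma> (c b) * b) \<in> J" using fin_dim by blast
  have "\<exists>C. \<forall>i. y ^ i - (\<Sum>b\<in>B. \<sigma> (C i b) * b) \<in> J" by (rule choice) (use B(2) in blast)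
  then obtain C where C: "\<And>i. y ^ i - (\<Sum>b\<in>B. \<sigma> (C i b) * b) \<in> J" by blast
  define w where "w i = (\<Sum>b\<in>B. \<sigma> (C i b) * b)" for i
  have wsp: "w i \<in> V.span B" for i
    unfolding w_def by (intro V.span_sum V.span_scale V.span_base)
  define n where "n = card B"
  show ?thesis
  proof (cases "inj_on w {..n}")
    case False
    then obtain i j where ij: "i \<le> n" "j \<le> n" "i \<noteq> j" "w i = w j" unfolding inj_on_def by auto
    define p where "p = monom (1::'k) i - monom 1 j"
    have "coeff p i = 1" unfolding p_def using ij by simp
    then have "p \<noteq> 0" by auto
    moreover have "ev p y = (y ^ i - w i) - (y ^ j - w j)"
      unfolding p_def ev_diff ev_monom using ij by (simp add: sig)
    then have "ev p y \<in> J" using C[of i] C[of j] unfolding w_def by (simp add: Ji)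
    ultimately show ?thesis by blast
  next
    case True
    define W where "W = w ` {..n}"
    have cW: "card W = Suc n" unfolding W_def using True by (simp add: card_image)
    have "W \<subseteq> V.span B" unfolding W_def using wsp by auto
    have "V.dependent W"
    proof (rule ccontr)
      assume "\<not> V.dependent W"
      from V.independent_span_bound[OF B(1) this \<open>W \<subseteq> V.span B\<close>] cW show False unfolding n_def by simp
    qed
    then obtain t u where t: "finite t" "t \<subseteq> W" "(\<Sum>v\<in>t. \<sigma> (u v) * v) = 0" and v0: "\<exists>v\<in>t. u v \<noteq> 0"
      unfolding V.dependent_explicit by blast
    define a where "a i = (if w i \<in> t then u (w i) else 0)" for i
    define p where "p = (\<Sum>i\<le>n. monom (a i) i)"
    obtain v where v: "v \<in> t" "u v \<noteq> 0" using v0 by blast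
    then obtain i0 where i0: "i0 \<le> n" "w i0 = v" using t(2) unfolding W_def by auto
    have "coeff p i0 = a i0" unfolding p_def coeff_sum using i0 by (simp add: if_distrib sum.delta cong: if_cong)
    then have "coeff p i0 \<noteq> 0" unfolding a_def using i0 v by simp
    then have "p \<noteq> 0" by auto
    moreover have "ev p y \<in> J"
    proof -
      have e: "ev p y = (\<Sum>i\<le>n. \<sigma> (a i) * y ^ i)" unfolding p_def ev_sum ev_monom ..
      have "(\<Sum>i\<le>n. \<sigma> (a i) * w i) = (\<Sum>i\<le>n. if w i \<in> t then \<sigma> (u (w i)) * w i else 0)"
        by (rule sum.cong) (auto simp: a_def sig)
      also have "\<dots> = (\<Sum>i\<in>{i\<in>{..n}. w i \<in> t}. \<sigma> (u (w i)) * w i)"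
        by (rule sum.inter_filter[symmetric]) simp
      also have "\<dots> = (\<Sum>v\<in>w ` {i\<in>{..n}. w i \<in> t}. \<sigma> (u v) * v)"
        by (rule sum.reindex[symmetric, unfolded o_def]) (use True in \<open>auto intro: inj_on_subset\<close>)
      also have "w ` {i\<in>{..n}. w i \<in> t} = t" using t(2) unfolding W_def by auto
      finally have z: "(\<Sum>i\<le>n. \<sigma> (a i) * w i) = 0" using t(3) by simp
      have "ev p y = (\<Sum>i\<le>n. \<sigma> (a i) * (y ^ i - w i)) + (\<Sum>i\<le>n. \<sigma> (a i) * w i)"
        unfolding e by (simp add: sum.distrib[symmetric] algebra_simps)
      also have "\<dots> = (\<Sum>i\<le>n. \<sigma> (a i) * (y ^ i - w i))" using z by simp
      finally show ?thesis using C unfolding w_def by (simp add: ideal_sum[OF J_ideal] Ji)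
    qed
    ultimately show ?thesis by blast
  qed
qed

end

lemma maximal_pow: "is_maximal_ideal m \<Longrightarrow> w \<notin> m \<Longrightarrow> w ^ n \<notin> m"
  by (induction n) (simp_all add: maximal_basics)

context hh begin

lemma sig_unit: "c \<noteq> 0 \<Longrightarrow> is_maximal_ideal m \<Longrightarrow> \<sigma> c \<notin> m"
proof
  assume c: "c \<noteq> 0" and m: "is_maximal_ideal m" and s: "\<sigma> c \<in> m"
  have "\<sigma> c * \<sigma> (inverse c) = 1" using c by (simp add: sig(4)[symmetric] sig)
  moreover have "\<sigma> c * \<sigma> (inverse c) \<in> m" using s ideal_basics(4)[OF maximal_basics(1)[OF m]] by blast
  ultimately show False using maximal_basics(2)[OF m] by simp
qed

lemma ev_mod_m: "is_ideal m \<Longrightarrow> y \<in> m \<Longrightarrow> ev q y - \<sigma> (coeff q 0) \<in> m"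
proof (induction q rule: pCons_induct)
  case 0 then show ?case by (simp add: sig ideal_basics)
next
  case (pCons a p)
  then show ?case by (simp add: ev_pCons ideal_basics)
qed

lemma ev_factor: "p \<noteq> 0 \<Longrightarrow> \<exists>k q. coeff q 0 \<noteq> 0 \<and> ev p y = y ^ k * ev q y"
proof (induction p rule: pCons_induct)
  case 0 then show ?case by simp
next
  case (pCons a p)
  show ?case
  proof (cases "a = 0")
    case False
    then show ?thesis by (intro exI[of _ 0] exI[of _ "pCons a p"]) simp
  next
    case True
    then have "p \<noteq> 0" using pCons by auto
    then obtain k q where "coeff q 0 \<noteq> 0" "ev p y = y ^ k * ev q y" using pCons by blast
    then show ?thesis using True
      by (intro exI[of _ "Suc k"] exI[of _ q]) (simp add: ev_pCons sig)
  qed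
qed

lemma min_poly:
  assumes m: "is_maximal_ideal m" and Jm: "J \<subseteq> m"
  shows "\<exists>q. ev q y \<in> m \<and> ev (pderiv q) y \<notin> m"
proof -
  obtain p where p: "p \<noteq> 0" "ev p y \<in> m" using findim_poly Jm by blast
  from ex_has_least_nat[of "\<lambda>p. p \<noteq> 0 \<and> ev p y \<in> m" p degree] p
  obtain q where q: "q \<noteq> 0" "ev q y \<in> m" and min: "\<And>r. r \<noteq> 0 \<and> ev r y \<in> m \<Longrightarrow> degree q \<le> degree r"
    by blast
  have "degree q \<noteq> 0"
  proof
    assume "degree q = 0"
    then have "q = [:coeff q 0:]" by (metis degree_eq_zeroE coeff_pCons_0)
    then have "ev q y = \<sigma> (coeff q 0)" by (metis ev_pCons ev_0 mult_zero_right add.right_neutral)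
    moreover have "coeff q 0 \<noteq> 0" using q(1) \<open>q = [:coeff q 0:]\<close> by (metis pCons_0_0)
    ultimately show False using sig_unit[OF _ m] q(2) by metis
  qed
  then have "pderiv q \<noteq> 0" "degree (pderiv q) < degree q"
    using pderiv_eq_0_iff[of q] degree_pderiv[of q] by auto
  then have "ev (pderiv q) y \<notin> m" using min[of "pderiv q"] by auto
  then show ?thesis using q by blast
qed

lemma loc_gen:
  fixes m :: "'s set"
  assumes m: "is_maximal_ideal m"
  shows "\<exists>\<pi>\<in>m. \<forall>y\<in>m. \<exists>w c. w \<notin> m \<and> w * y = \<pi> * c"
proof -
  have im: "is_ideal m" by (rule maximal_basics(1)[OF m])
  define A where "A = {p. snd p \<notin> m \<and> fst p \<in> m}"
  have "loc_ideal m A" unfolding loc_ideal_def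
  proof (intro conjI ballI allI impI)
    show "A \<subseteq> {p. snd p \<notin> m}" unfolding A_def by auto
    show "(0, 1) \<in> A" unfolding A_def using maximal_basics[OF m] ideal_basics(1)[OF im] by auto
  next
    fix p q assume "p \<in> A" "q \<in> A"
    then show "(fst p * snd q + fst q * snd p, snd p * snd q) \<in> A"
      unfolding A_def using maximal_basics[OF m] ideal_basics[OF im] by auto
  next
    fix p c u assume "p \<in> A" "u \<notin> m"
    then show "(c * fst p, u * snd p) \<in> A"
      unfolding A_def using maximal_basics[OF m] ideal_basics[OF im] by auto
  next
    fix p q assume p: "p \<in> A" and q: "snd q \<notin> m" and e: "loc_eq m p q"
    obtain u where u: "u \<notin> m" "u * (fst p * snd q - fst q * snd p) = 0" using e unfolding loc_eq_def by blast
    have "u * fst q * snd p = u * fst p * snd q" using u(2) by (simp add: algebra_simps)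
    moreover have "u * fst p * snd q \<in> m" using p unfolding A_def using ideal_basics[OF im] by auto
    ultimately have "fst q \<in> m" using maximal_basics(3)[OF m] u(1) p unfolding A_def
      by (metis mem_Collect_eq)
    then show "q \<in> A" using q unfolding A_def by auto
  qed
  have lp: "\<forall>m::'s set. is_maximal_ideal m \<longrightarrow> (\<forall>A. loc_ideal m A \<longrightarrow> loc_principal m A)"
    using loc_PIR unfolding locally_PIR_def by simp
  have "loc_principal m A" by (rule lp[rule_format, OF m \<open>loc_ideal m A\<close>])
  then obtain g v where gv: "v \<notin> m" "A = {q. snd q \<notin> m \<and> (\<exists>c u. u \<notin> m \<and> loc_eq m q (c * g, u * v))}"
    unfolding loc_principal_def by blast
  have "(g, v) \<in> A" unfolding gv(2) using gv(1) maximal_basics(2)[OF m]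
    by (auto simp: loc_eq_def intro!: exI[of _ 1])
  then have gm: "g \<in> m" unfolding A_def by auto
  have "\<forall>y\<in>m. \<exists>w c. w \<notin> m \<and> w * y = g * c"
  proof
    fix y assume "y \<in> m"
    then have "(y, 1) \<in> A" unfolding A_def using maximal_basics(2)[OF m] by auto
    then obtain c u u' where "u \<notin> m" "u' \<notin> m" "u' * (y * (u * v) - c * g * 1) = 0"
      unfolding gv(2) loc_eq_def by auto
    then have "(u' * u * v) * y = g * (u' * c)" "u' * u * v \<notin> m"
      using maximal_basics(3)[OF m] gv(1) by (auto simp: algebra_simps)
    then show "\<exists>w c. w \<notin> m \<and> w * y = g * c" by blast
  qed
  then show ?thesis using gm by blast
qed

lemma loc_setup:
  assumes m: "is_maximal_ideal m" and Jm: "J \<subseteq> m"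
  shows "\<exists>\<pi> d. \<pi> \<in> m \<and> \<pi> ^ Suc d \<in> J \<and> (\<forall>w. w \<notin> m \<longrightarrow> w * \<pi> ^ d \<notin> J) \<and>
     (\<forall>y\<in>m. \<exists>w c. w \<notin> m \<and> w * y = \<pi> * c)"
proof -
  have im: "is_ideal m" by (rule maximal_basics(1)[OF m])
  obtain p0 where p0: "p0 \<in> m" and gen: "\<forall>y\<in>m. \<exists>w c. w \<notin> m \<and> w * y = p0 * c"
    using loc_gen[OF m] by blast
  obtain p where p: "p \<noteq> 0" "ev p p0 \<in> J" using findim_poly by blast
  obtain k q where kq: "coeff q 0 \<noteq> 0" "ev p p0 = p0 ^ k * ev q p0" using ev_factor[OF p(1), of p0] by blast
  have "ev q p0 \<notin> m"
  proof
    assume "ev q p0 \<in> m"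
    then have "ev q p0 - (ev q p0 - \<sigma> (coeff q 0)) \<in> m" using ev_mod_m[OF im p0] by (rule ideal_basics(6)[OF im])
    then show False using sig_unit[OF kq(1) m] by simp
  qed
  moreover have "ev q p0 * p0 ^ k \<in> J" using p(2) kq(2) by (simp add: mult.commute)
  ultimately have ex: "\<exists>w. w \<notin> m \<and> w * p0 ^ k \<in> J" by blast
  from ex_has_least_nat[of "\<lambda>e. \<exists>w. w \<notin> m \<and> w * p0 ^ e \<in> J" k id] ex
  obtain e where e: "\<exists>w. w \<notin> m \<and> w * p0 ^ e \<in> J" and emin: "\<And>e'. (\<exists>w. w \<notin> m \<and> w * p0 ^ e' \<in> J) \<Longrightarrow> e \<le> e'"
    unfolding id_def by blast
  have "e \<noteq> 0"
  proof
    assume "e = 0"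
    with e obtain w where "w \<notin> m" "w \<in> J" by auto
    with Jm show False by auto
  qed
  then obtain d where d: "e = Suc d" by (cases e) auto
  obtain we where we: "we \<notin> m" "we * p0 ^ Suc d \<in> J" using e d by blast
  have dmin: "\<forall>w. w \<notin> m \<longrightarrow> w * p0 ^ d \<notin> J" using emin[of d] d by auto
  define \<pi> where "\<pi> = we * p0"
  have "\<pi> \<in> m" unfolding \<pi>_def using p0 ideal_basics[OF im] by auto
  moreover have "\<pi> ^ Suc d \<in> J"
  proof -
    have "\<pi> ^ Suc d = we ^ d * (we * p0 ^ Suc d)" unfolding \<pi>_def by (simp add: power_mult_distrib algebra_simps)
    then show ?thesis using we Ji by auto
  qed
  moreover have "\<forall>w. w \<notin> m \<longrightarrow> w * \<pi> ^ d \<notin> J"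
  proof (intro allI impI)
    fix w assume "w \<notin> m"
    then have "w * we ^ d \<notin> m" using maximal_basics(3)[OF m] maximal_pow[OF m we(1)] by blast
    moreover have "w * \<pi> ^ d = (w * we ^ d) * p0 ^ d" unfolding \<pi>_def by (simp add: power_mult_distrib algebra_simps)
    ultimately show "w * \<pi> ^ d \<notin> J" using dmin by simp
  qed
  moreover have "\<forall>y\<in>m. \<exists>w c. w \<notin> m \<and> w * y = \<pi> * c"
  proof
    fix y assume "y \<in> m"
    then obtain w c where wc: "w \<notin> m" "w * y = p0 * c" using gen by blast
    have "(w * we) * y = \<pi> * c" unfolding \<pi>_def using wc(2)
      by (metis mult.assoc mult.commute)
    moreover have "w * we \<notin> m" using maximal_basics(3)[OF m wc(1) we(1)] .
    ultimately show "\<exists>w c. w \<notin> m \<and> w * y = \<pi> * c" by blast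
  qed
  ultimately show ?thesis by blast
qed

end

context hh begin

lemma TT_cong2: "a \<in> TT \<Longrightarrow> b - a \<in> Nr \<Longrightarrow> b \<in> TT"
  using TT_cong[of a b] Nr_uminus[of "b - a"] by simp

lemma J_loc:
  assumes m: "is_maximal_ideal m" and Jm: "J \<subseteq> m"
    and dmin: "\<forall>w. w \<notin> m \<longrightarrow> w * \<pi> ^ d \<notin> J"
    and gen: "\<forall>y\<in>m. \<exists>w c. w \<notin> m \<and> w * y = \<pi> * c" and x: "x \<in> J"
  shows "\<exists>w c. w \<notin> m \<and> w * x = \<pi> ^ Suc d * c"
proof -
  have "j \<le> Suc d \<Longrightarrow> \<exists>w c. w \<notin> m \<and> w * x = \<pi> ^ j * c" for j
  proof (induction j)
    case 0
    have "(1::'s) \<notin> m" using maximal_basics(2)[OF m] .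
    then show ?case by (intro exI[of _ 1] exI[of _ x]) simp
  next
    case (Suc j)
    then obtain w c where wc: "w \<notin> m" "w * x = \<pi> ^ j * c" by auto
    have "c \<in> m"
    proof (rule ccontr)
      assume "c \<notin> m"
      have "c * \<pi> ^ d = (w * x) * \<pi> ^ (d - j)" using wc(2) Suc.prems
        by (simp add: power_add[symmetric] algebra_simps)
      also have "\<dots> \<in> J" by (rule Ji(4)[OF Ji(3)[OF x]])
      finally show False using dmin \<open>c \<notin> m\<close> by blast
    qed
    then obtain w' c' where w'c': "w' \<notin> m" "w' * c = \<pi> * c'" using gen by blast
    have "(w' * w) * x = \<pi> ^ Suc j * c'" using wc(2) w'c'(2)
      by (metis (no_types, lifting) mult.assoc mult.left_commute power_Suc2)
    moreover have "w' * w \<notin> m" using maximal_basics(3)[OF m w'c'(1) wc(1)] .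
    ultimately show ?case by blast
  qed
  then show ?thesis by blast
qed

lemma uniform:
  assumes m: "is_maximal_ideal m" and X: "X \<in> J"
    and H: "\<forall>y. \<exists>s. s \<notin> m \<and> (\<forall>h. frag_of (X * h * s, y) \<in> TT)"
  shows "\<exists>s. s \<notin> m \<and> (\<forall>h y. frag_of (X * h * s, y) \<in> TT)"
proof -
  obtain B where B: "finite B" "\<And>s. \<exists>c. s - (\<Sum>b\<in>B. \<sigma> (c b) * b) \<in> J" using fin_dim by blast
  have "\<exists>S. \<forall>b. S b \<notin> m \<and> (\<forall>h. frag_of (X * h * S b, b) \<in> TT)" by (rule choice) (use H in blast)
  then obtain S where S: "\<And>b. S b \<notin> m" "\<And>b h. frag_of (X * h * S b, b) \<in> TT" by blast
  define s where "s = (\<Prod>b\<in>B. S b)"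
  have sm: "s \<notin> m" unfolding s_def by (rule maximal_prod[OF m S(1)])
  have "frag_of (X * h * s, y) \<in> TT" for h y
  proof -
    obtain c where c: "y - (\<Sum>b\<in>B. \<sigma> (c b) * b) \<in> J" using B(2) by blast
    define j where "j = y - (\<Sum>b\<in>B. \<sigma> (c b) * b)"
    define x where "x = X * h * s"
    have xJ: "x \<in> J" unfolding x_def using X Ji by auto
    have y: "y = (\<Sum>b\<in>B. \<sigma> (c b) * b) + j" unfolding j_def by simp
    have T1: "(\<Sum>b\<in>B. frag_of (x * \<sigma> (c b), b)) \<in> TT"
    proof (rule TT_sum)
      fix b assume "b \<in> B"
      then have "x * \<sigma> (c b) = X * (h * \<sigma> (c b) * (\<Prod>b'\<in>B - {b}. S b')) * S b"
        unfolding x_def s_def using B(1) by (simp add: prod.remove algebra_simps)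
      then show "frag_of (x * \<sigma> (c b), b) \<in> TT" using S(2) by simp
    qed
    have N1: "(\<Sum>b\<in>B. frag_of (x, \<sigma> (c b) * b)) - (\<Sum>b\<in>B. frag_of (x * \<sigma> (c b), b)) \<in> Nr"
      unfolding sum_subtractf[symmetric] by (rule Nr_sum) (rule br_scal[OF xJ])
    have N2: "frag_of (x, \<Sum>b\<in>B. \<sigma> (c b) * b) - (\<Sum>b\<in>B. frag_of (x, \<sigma> (c b) * b)) \<in> Nr"
      by (rule br_sumR[OF xJ])
    have N3: "frag_of (x, (\<Sum>b\<in>B. \<sigma> (c b) * b) + j) - frag_of (x, \<Sum>b\<in>B. \<sigma> (c b) * b) - frag_of (x, j) \<in> Nr"
      by (rule br_addR[OF xJ])
    have N4: "frag_of (x, j) \<in> Nr" using c unfolding j_def by (intro br_J xJ)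
    have "frag_of (x, y) - (\<Sum>b\<in>B. frag_of (x * \<sigma> (c b), b)) =
      (frag_of (x, (\<Sum>b\<in>B. \<sigma> (c b) * b) + j) - frag_of (x, \<Sum>b\<in>B. \<sigma> (c b) * b) - frag_of (x, j))
      + frag_of (x, j)
      + (frag_of (x, \<Sum>b\<in>B. \<sigma> (c b) * b) - (\<Sum>b\<in>B. frag_of (x, \<sigma> (c b) * b)))
      + ((\<Sum>b\<in>B. frag_of (x, \<sigma> (c b) * b)) - (\<Sum>b\<in>B. frag_of (x * \<sigma> (c b), b)))"
      by (subst y) (simp add: algebra_simps)
    also have "\<dots> \<in> Nr" by (rule Nr_add[OF Nr_add[OF Nr_add[OF N3 N4] N2] N1])
    finally show ?thesis using TT_cong2[OF T1] unfolding x_def by blast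
  qed
  then show ?thesis using sm by blast
qed

end

context hh begin

lemma local_step:
  assumes m: "is_maximal_ideal m" and Jm: "J \<subseteq> m" and pim: "\<pi> \<in> m"
    and piJ: "\<pi> ^ Suc d \<in> J"
    and gen: "\<forall>y\<in>m. \<exists>w c. w \<notin> m \<and> w * y = \<pi> * c"
    and IH: "\<exists>s. s \<notin> m \<and> (\<forall>h y. frag_of (\<pi> ^ (Suc d + Suc i) * h * s, y) \<in> TT)"
  shows "\<exists>s. s \<notin> m \<and> (\<forall>h y. frag_of (\<pi> ^ (Suc d + i) * h * s, y) \<in> TT)"
proof -
  obtain s1 where s1: "s1 \<notin> m" "\<And>h y. frag_of (\<pi> ^ (Suc d + Suc i) * h * s1, y) \<in> TT" using IH by blast
  have piJ': "\<pi> ^ (Suc d + k) * h \<in> J" for k h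
  proof -
    have "\<pi> ^ (Suc d + k) * h = \<pi> ^ Suc d * (\<pi> ^ k * h)" by (simp only: power_add mult.assoc)
    then show ?thesis using Ji(4)[OF piJ] by simp
  qed
  have piJ0: "\<pi> ^ (Suc d + k) \<in> J" for k using piJ'[of k 1] by simp
  have G: "frag_of (\<pi> ^ (Suc d + i) * h * (s1 * s1), \<pi>) \<in> TT" for h
  proof -
    define N where "N = Suc d + Suc i"
    define c0 where "c0 = \<sigma> (inverse (of_nat N))"
    define u where "u = h * c0 * s1"
    define h' where "h' = u * s1"
    define a where "a = \<pi> ^ Suc i * h'"
    define Z where "Z = \<pi> ^ (Suc d + i) * h'"
    have ZJ: "Z \<in> J" unfolding Z_def by (rule piJ')
    have aZ: "a * \<pi> ^ d = Z" unfolding a_def Z_def by (simp add: power_add algebra_simps)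
    have cyc: "frag_cmul (int (Suc d)) (frag_of (Z, \<pi>)) + frag_of (\<pi> ^ Suc d, a) \<in> TT"
      using cycle[OF piJ, of a] aZ ZJ by simp
    have L1: "frag_of (\<pi> ^ Suc d, \<pi> ^ Suc i * h') - frag_of (\<pi> ^ Suc d * \<pi> ^ Suc i, h')
        - frag_of (\<pi> ^ Suc d * h', \<pi> ^ Suc i) \<in> Nr"
      by (rule br_leib[OF piJ])
    have L2: "frag_of (\<pi> ^ Suc d * h', \<pi> ^ Suc i) - frag_cmul (int (Suc i)) (frag_of (\<pi> ^ Suc d * h' * \<pi> ^ i, \<pi>)) \<in> Nr"
      by (rule br_pow) (rule Ji(4)[OF piJ])
    have e1: "\<pi> ^ Suc d * h' * \<pi> ^ i = Z" unfolding Z_def by (simp add: power_add algebra_simps)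
    have e2: "\<pi> ^ Suc d * \<pi> ^ Suc i = \<pi> ^ (Suc d + Suc i)" by (simp add: power_add)
    have L3: "frag_of (\<pi> ^ (Suc d + Suc i), h') \<in> TT"
    proof -
      have "frag_of (\<pi> ^ (Suc d + Suc i), u * s1) - frag_of (\<pi> ^ (Suc d + Suc i) * u, s1)
          - frag_of (\<pi> ^ (Suc d + Suc i) * s1, u) \<in> Nr"
        by (rule br_leib) (rule piJ0)
      moreover have "frag_of (\<pi> ^ (Suc d + Suc i) * u, s1) \<in> TT"
        using s1(2)[of "h * c0" s1] unfolding u_def by (simp add: mult.assoc)
      moreover have "frag_of (\<pi> ^ (Suc d + Suc i) * s1, u) \<in> TT"
        using s1(2)[of 1 u] by simp
      ultimately show ?thesis unfolding h'_def
        using TT_cong2[OF TT_add] by (metis diff_diff_eq)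
    qed
    have "frag_cmul (int N) (frag_of (Z, \<pi>)) \<in> TT"
    proof (rule TT_cong2[OF TT_diff[OF cyc L3]])
      have "frag_cmul (int N) (frag_of (Z, \<pi>)) -
          (frag_cmul (int (Suc d)) (frag_of (Z, \<pi>)) + frag_of (\<pi> ^ Suc d, a) - frag_of (\<pi> ^ (Suc d + Suc i), h'))
        = - ((frag_of (\<pi> ^ Suc d, \<pi> ^ Suc i * h') - frag_of (\<pi> ^ Suc d * \<pi> ^ Suc i, h')
        - frag_of (\<pi> ^ Suc d * h', \<pi> ^ Suc i)) + (frag_of (\<pi> ^ Suc d * h', \<pi> ^ Suc i) - frag_cmul (int (Suc i)) (frag_of (\<pi> ^ Suc d * h' * \<pi> ^ i, \<pi>))))"
      proof -
        have cN: "frag_cmul (int N) (frag_of (Z, \<pi>)) = frag_cmul (int (Suc d)) (frag_of (Z, \<pi>)) + frag_cmul (int (Suc i)) (frag_of (Z, \<pi>))"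
          unfolding N_def by (simp only: of_nat_add frag_cmul_distrib)
        have grp: "(A::('s \<times> 's) \<Rightarrow>\<^sub>0 int) + B - (A + X - Y) = - ((X - Y - W) + (W - B))" for A B X Y W
          by (simp add: algebra_simps)
        show ?thesis unfolding cN e1 e2 a_def by (rule grp)
      qed
      also have "\<dots> \<in> Nr" by (rule Nr_uminus[OF Nr_add[OF L1 L2]])
      finally show "frag_cmul (int N) (frag_of (Z, \<pi>)) -
          (frag_cmul (int (Suc d)) (frag_of (Z, \<pi>)) + frag_of (\<pi> ^ Suc d, a) - frag_of (\<pi> ^ (Suc d + Suc i), h'))
          \<in> Nr" .
    qed
    moreover have "frag_cmul (int N) (frag_of (Z, \<pi>)) - frag_of (of_nat N * Z, \<pi>) \<in> Nr"
      by (rule br_cmul[OF ZJ])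
    ultimately have "frag_of (of_nat N * Z, \<pi>) \<in> TT" by (rule TT_cong)
    moreover have "of_nat N * Z = \<pi> ^ (Suc d + i) * h * (s1 * s1)"
    proof -
      have "of_nat N * c0 = (1::'s)" unfolding c0_def N_def
        by (simp only: sig_nat[symmetric] sig(4)[symmetric]) (simp add: sig del: of_nat_Suc of_nat_add)
      moreover have "of_nat N * Z = (of_nat N * c0) * (\<pi> ^ (Suc d + i) * h * (s1 * s1))"
        unfolding Z_def h'_def u_def by (simp only: ac_simps)
      ultimately show ?thesis by simp
    qed
    ultimately show ?thesis by simp
  qed
  have Y: "\<exists>s. s \<notin> m \<and> (\<forall>h. frag_of (\<pi> ^ (Suc d + i) * h * s, y) \<in> TT)" for y
  proof -
    obtain q where q: "ev q y \<in> m" "ev (pderiv q) y \<notin> m" using min_poly[OF m Jm] by blast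
    define g where "g = ev q y"
    define q' where "q' = ev (pderiv q) y"
    obtain w c where wc: "w \<notin> m" "w * g = \<pi> * c" using gen q(1) unfolding g_def by blast
    define s where "s = s1 * s1 * w * w * q'"
    have sm: "s \<notin> m" unfolding s_def using maximal_basics(3)[OF m] s1(1) wc(1) q(2) unfolding q'_def by metis
    have "frag_of (\<pi> ^ (Suc d + i) * h * s, y) \<in> TT" for h
    proof -
      define X where "X = \<pi> ^ (Suc d + i) * h * (s1 * s1) * w"
      have XJ: "X \<in> J" unfolding X_def using piJ'[of i "h * (s1 * s1) * w"] by (simp only: mult.assoc)
      have XwJ: "X * w \<in> J" using XJ Ji by auto
      have P1: "frag_of (X * w, ev q y) - frag_of (X * w * ev (pderiv q) y, y) \<in> Nr" by (rule br_poly[OF XwJ])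
      have P2: "frag_of (X, w * g) - frag_of (X * w, g) - frag_of (X * g, w) \<in> Nr" by (rule br_leib[OF XJ])
      have P3: "frag_of (X, \<pi> * c) - frag_of (X * \<pi>, c) - frag_of (X * c, \<pi>) \<in> Nr" by (rule br_leib[OF XJ])
      have T1: "frag_of (X * \<pi>, c) \<in> TT"
      proof -
        have "X * \<pi> = \<pi> ^ (Suc d + Suc i) * (h * w * s1) * s1" unfolding X_def by (simp add: algebra_simps)
        then show ?thesis using s1(2) by simp
      qed
      have T2: "frag_of (X * c, \<pi>) \<in> TT"
      proof -
        have "X * c = \<pi> ^ (Suc d + i) * (h * w * c) * (s1 * s1)" unfolding X_def by (simp add: algebra_simps)
        then show ?thesis using G by simp
      qed
      have T3: "frag_of (X * g, w) \<in> TT"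
      proof -
        have "X * g = \<pi> ^ (Suc d + i) * h * (s1 * s1) * (w * g)" unfolding X_def by (simp add: algebra_simps)
        also have "\<dots> = \<pi> ^ (Suc d + Suc i) * (h * c * s1) * s1" unfolding wc(2) by (simp add: algebra_simps)
        finally show ?thesis using s1(2) by simp
      qed
      have "frag_of (X * w * q', y) - (frag_of (X * \<pi>, c) + frag_of (X * c, \<pi>) - frag_of (X * g, w))
        = (frag_of (X, \<pi> * c) - frag_of (X * \<pi>, c) - frag_of (X * c, \<pi>))
          - (frag_of (X, w * g) - frag_of (X * w, g) - frag_of (X * g, w))
          - (frag_of (X * w, ev q y) - frag_of (X * w * ev (pderiv q) y, y))"
        unfolding q'_def g_def[symmetric] wc(2) by (simp add: algebra_simps)
      also have "\<dots> \<in> Nr" by (rule Nr_diff[OF Nr_diff[OF P3 P2] P1])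
      finally have "frag_of (X * w * q', y) \<in> TT" by (rule TT_cong2[OF TT_diff[OF TT_add[OF T1 T2] T3]])
      moreover have "X * w * q' = \<pi> ^ (Suc d + i) * h * s" unfolding X_def s_def by (simp add: algebra_simps)
      ultimately show ?thesis by simp
    qed
    then show ?thesis using sm by blast
  qed
  show ?thesis by (rule uniform[OF m piJ0[of i]]) (use Y in simp)
qed

end

context hh begin

lemma local_all:
  assumes m: "is_maximal_ideal m" and Jm: "J \<subseteq> m" and x: "x \<in> J"
  shows "\<exists>u. u \<notin> m \<and> (\<forall>t y. frag_of (x * u * t, y) \<in> TT)"
proof -
  obtain \<pi> d where pd: "\<pi> \<in> m" "\<pi> ^ Suc d \<in> J" "\<forall>w. w \<notin> m \<longrightarrow> w * \<pi> ^ d \<notin> J"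
    "\<forall>y\<in>m. \<exists>w c. w \<notin> m \<and> w * y = \<pi> * c"
    using loc_setup[OF m Jm] by blast
  define E where "E i \<longleftrightarrow> (\<exists>s. s \<notin> m \<and> (\<forall>h y. frag_of (\<pi> ^ (Suc d + i) * h * s, y) \<in> TT))" for i
  have base: "E (Suc d)" unfolding E_def
  proof (intro exI conjI allI)
    show "(1::'s) \<notin> m" by (rule maximal_basics(2)[OF m])
    fix h y
    have "\<pi> ^ (Suc d + Suc d) * h * 1 = \<pi> ^ Suc d * (\<pi> ^ Suc d * h)" by (simp add: power_add ac_simps)
    moreover have "frag_of (\<pi> ^ Suc d * (\<pi> ^ Suc d * h), y) \<in> Nr" using pd(2) by (intro br_JJ Ji)
    ultimately show "frag_of (\<pi> ^ (Suc d + Suc d) * h * 1, y) \<in> TT" using TT_Nr by simp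
  qed
  have "k \<le> Suc d \<Longrightarrow> E (Suc d - k)" for k
  proof (induction k)
    case 0 then show ?case using base by simp
  next
    case (Suc k)
    then have IH: "E (Suc d - k)" by simp
    have eq: "Suc d - k = Suc (Suc d - Suc k)" using Suc.prems by simp
    show ?case using local_step[OF m Jm pd(1) pd(2) pd(4)] IH unfolding E_def eq by blast
  qed
  from this[of "Suc d"] obtain s where s: "s \<notin> m" "\<And>h y. frag_of (\<pi> ^ Suc d * h * s, y) \<in> TT"
    unfolding E_def by auto
  obtain w c where wc: "w \<notin> m" "w * x = \<pi> ^ Suc d * c" using J_loc[OF m Jm pd(3) pd(4) x] by blast
  have "frag_of (x * (w * s) * t, y) \<in> TT" for t y
  proof -
    have "x * (w * s) * t = \<pi> ^ Suc d * (c * t) * s" using wc(2) by (metis mult.assoc mult.commute)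
    then show ?thesis using s(2) by simp
  qed
  moreover have "w * s \<notin> m" by (rule maximal_basics(3)[OF m wc(1) s(1)])
  ultimately show ?thesis by blast
qed

lemma main_br:
  assumes x: "x \<in> J"
  shows "frag_of (x, y) \<in> TT"
proof -
  define A where "A = {u. \<forall>t y. frag_of (x * u * t, y) \<in> TT}"
  have iA: "is_ideal A" unfolding is_ideal_def
  proof (intro conjI ballI allI)
    show "0 \<in> A" unfolding A_def using br_zeroL TT_Nr by simp
  next
    fix a b assume "a \<in> A" "b \<in> A"
    show "a + b \<in> A" unfolding A_def
    proof (intro CollectI allI)
      fix t y
      have "frag_of (x * a * t + x * b * t, y) - frag_of (x * a * t, y) - frag_of (x * b * t, y) \<in> Nr"
        using x by (intro br_addL) (auto intro: Ji)
      then have "frag_of (x * a * t + x * b * t, y) - (frag_of (x * a * t, y) + frag_of (x * b * t, y)) \<in> Nr"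
        by (simp add: algebra_simps)
      moreover have "frag_of (x * a * t, y) + frag_of (x * b * t, y) \<in> TT"
        using \<open>a \<in> A\<close> \<open>b \<in> A\<close> unfolding A_def by (intro TT_add) auto
      ultimately have "frag_of (x * a * t + x * b * t, y) \<in> TT" using TT_cong2 by blast
      then show "frag_of (x * (a + b) * t, y) \<in> TT" by (simp add: algebra_simps)
    qed
  next
    fix r a assume "a \<in> A"
    show "r * a \<in> A" unfolding A_def
    proof (intro CollectI allI)
      fix t y
      have eq: "x * (r * a) * t = x * a * (r * t)" by (simp add: ac_simps)
      have "frag_of (x * a * (r * t), y) \<in> TT" using \<open>a \<in> A\<close> unfolding A_def by blast
      then show "frag_of (x * (r * a) * t, y) \<in> TT" by (simp only: eq)
    qed
  qed
  have "1 \<in> A"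
  proof (rule ccontr)
    assume "1 \<notin> A"
    then obtain m where m: "is_maximal_ideal m" "A \<subseteq> m" using exists_maximal[OF iA] by blast
    show False
    proof (cases "J \<subseteq> m")
      case True
      then obtain u where "u \<notin> m" "\<forall>t y. frag_of (x * u * t, y) \<in> TT" using local_all[OF m(1) True x] by blast
      then show False using m(2) unfolding A_def by blast
    next
      case False
      then obtain j where j: "j \<in> J" "j \<notin> m" by blast
      have "j \<in> A" unfolding A_def
      proof (intro CollectI allI)
        fix t y
        have "frag_of (x * (j * t), y) \<in> Nr" using x j by (intro br_JJ Ji)
        then show "frag_of (x * j * t, y) \<in> TT" using TT_Nr by (simp add: mult.assoc)
      qed
      then show False using m(2) j by blast
    qed
  qed
  then have "frag_of (x * 1 * 1, y) \<in> TT" unfolding A_def by blast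
  then show ?thesis by simp
qed

lemma main_TT:
  assumes "\<forall>t\<in>Poly_Mapping.keys \<omega>. fst t \<in> J"
  shows "\<omega> \<in> TT"
proof -
  have "Poly_Mapping.keys \<omega> \<subseteq> {t. fst t \<in> J}" using assms by auto
  then show ?thesis
  proof (induction \<omega> rule: frag_induction)
    case zero then show ?case by (rule TT_0)
  next
    case (one t) then show ?case using main_br[of "fst t" "snd t"] by simp
  next
    case (diff a b) then show ?case by (rule TT_diff)
  qed
qed

end

theorem theorem1p2:
  fixes \<rho> :: "'k::field_char_0 \<Rightarrow> 'r::comm_ring_1"
    and \<sigma> :: "'k \<Rightarrow> 's::comm_ring_1"
    and f :: "'r \<Rightarrow> 's"
    and I :: "'r set"
  assumes hom_rho: "is_ring_hom \<rho>"
    and hom_sigma: "is_ring_hom \<sigma>"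
    and hom_f: "is_ring_hom f"
    and f_k_linear: "\<And>c. f (\<rho> c) = \<sigma> c"
    and I_ideal: "is_ideal I"
    and f_inj_I: "inj_on f I"
    and fI_ideal: "is_ideal (f ` I)"
    and loc_PIR: "locally_PIR TYPE('s)"
    and fin_dim: "\<exists>B::'s set. finite B \<and>
                    (\<forall>s. \<exists>c::'s \<Rightarrow> 'k. s - (\<Sum>b\<in>B. \<sigma> (c b) * b) \<in> f ` I)"
  shows "\<forall>\<omega> :: ('s \<times> 's) \<Rightarrow>\<^sub>0 int. (\<forall>t\<in>Poly_Mapping.keys \<omega>. fst t \<in> f ` I) \<longrightarrow>
           (\<exists>z :: ('s \<times> 's \<times> 's) \<Rightarrow>\<^sub>0 int.
              hoch_b2 z \<in> zspan (quot_tensor2_rels \<sigma> (f ` I)) \<and>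
              (\<exists>P Q :: ('s \<times> 's) \<Rightarrow>\<^sub>0 int.
                 (\<forall>t\<in>Poly_Mapping.keys P. fst t \<in> f ` I) \<and> (\<forall>t\<in>Poly_Mapping.keys Q. snd t \<in> f ` I) \<and>
                 hoch_b2 z - (P + Q) \<in> zspan (tensor2_rels \<sigma>) \<and>
                 (P - frag_extend (\<lambda>(r, x). frag_of (x, r)) Q) - \<omega>
                   \<in> zspan (omega_tensor_rels f (f ` I))))"
proof -
  interpret H: hh \<sigma> f "f ` I"
  proof
    show "is_ring_hom \<sigma>" "is_ring_hom f" "is_ideal (f ` I)" "locally_PIR TYPE('s)" by fact+
    show "\<And>c. \<sigma> c \<in> range f" using f_k_linear by (metis rangeI)
    show "f ` I \<subseteq> range f" by auto
    show "\<exists>B::'s set. finite B \<and> (\<forall>s. \<exists>c::'s \<Rightarrow> 'k. s - (\<Sum>b\<in>B. \<sigma> (c b) * b) \<in> f ` I)" by (rule fin_dim)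
  qed
  show ?thesis
  proof (intro allI impI)
    fix \<omega> :: "('s \<times> 's) \<Rightarrow>\<^sub>0 int"
    assume "\<forall>t\<in>Poly_Mapping.keys \<omega>. fst t \<in> f ` I"
    then have om: "\<omega> \<in> H.TT" by (rule H.main_TT)
    show "\<exists>z :: ('s \<times> 's \<times> 's) \<Rightarrow>\<^sub>0 int.
              hoch_b2 z \<in> zspan (quot_tensor2_rels \<sigma> (f ` I)) \<and>
              (\<exists>P Q :: ('s \<times> 's) \<Rightarrow>\<^sub>0 int.
                 (\<forall>t\<in>Poly_Mapping.keys P. fst t \<in> f ` I) \<and> (\<forall>t\<in>Poly_Mapping.keys Q. snd t \<in> f ` I) \<and>
                 hoch_b2 z - (P + Q) \<in> zspan (tensor2_rels \<sigma>) \<and>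
                 (P - frag_extend (\<lambda>(r, x). frag_of (x, r)) Q) - \<omega>
                   \<in> zspan (omega_tensor_rels f (f ` I)))"
      using om unfolding H.TT_def H.Nr_def mem_Collect_eq by assumption
  qed
qed

end
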